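(* Let $\mathcal{C}$ be a closed convex set with $\overline\Pi=\mathcal{C}\cap\Pi$ closed and convex, let $S=(x_1,\dots,x_m)$ be i.i.d. from $\mathcal{D}_{\mathcal{X}}$ with empirical distribution $\widehat{\mathcal{D}}_{\mathcal{X}}$, let $\mathcal{F}=\{x\mapsto\mathsf{B}_F(\pi(x)\parallel\pi_0(x)):\pi\in\overline\Pi\}\cup\{x\mapsto\mathsf{B}_F(\pi'(x)\parallel\pi(x)):\pi,\pi'\in\overline\Pi\}$ and $\epsilon_m=\sup_{f\in\mathcal{F}}|\mathbb{E}_{\mathcal{D}_{\mathcal{X}}}[f]-\mathbb{E}_{\widehat{\mathcal{D}}_{\mathcal{X}}}[f]|$. Let $\widehat\pi$ minimize $\mathbb{E}_{\mathcal{D}_{\mathcal{X}}}[\mathsf{B}_F(\pi(x)\parallel\pi_0(x))]$ and $\widehat\pi_S$ minimize $\mathbb{E}_{\widehat{\mathcal{D}}_{\mathcal{X}}}[\mathsf{B}_F(\pi(x)\parallel\pi_0(x))]$ over $\pi\in\overline\Pi$, and assume $\pi^*\in\overline\Pi$. Then, with $\mathbb{E}$ denoting $\mathbb{E}_{x\sim\mathcal{D}_{\mathcal{X}}}$: (1) $\mathbb{E}[\mathsf{B}_F(\widehat\pi(x)\parallel\pi_0(x))]\le\mathbb{E}[\mathsf{B}_F(\widehat\pi_S(x)\parallel\pi_0(x))]\le\mathbb{E}[\mathsf{B}_F(\widehat\pi(x)\parallel\pi_0(x))]+2\epsilon_m$; (2) $\mathrm{Improv}(\widehat\pi_S)\g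e\mathbb{E}[\mathsf{B}_F(\widehat\pi(x)\parallel\pi_0(x))]-\mathbb{E}[\mathsf{B}_F(\pi^*(x)\parallel\widehat\pi(x))]-6\epsilon_m$.
   Context: $\mathcal{X},\mathcal{Y}$ finite; models are maps $\pi\colon\mathcal{X}\to\Delta(\mathcal{Y})$; $\Pi\subseteq\Delta(\mathcal{Y})^{\mathcal{X}}$ closed and convex; $\pi_0$ a baseline model; $\pi^*$ a reference model; $\mathcal{D}_{\mathcal{X}}$ a full-support distribution on $\mathcal{X}$. $F$ is convex and differentiable on the interior of its domain (containing $\Delta(\mathcal{Y})$), $\mathsf{B}_F(p\parallel q)=F(p)-F(q)-\langle\nabla F(q),p-q\rangle$. The improvement of a model $\pi$ is $\mathrm{Improv}(\pi)=\mathbb{E}[\mathsf{B}_F(\pi^*(x)\parallel\pi_0(x))]-\mathbb{E}[\mathsf{B}_F(\pi^*(x)\parallel\pi(x))]$. *)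

theory Defs
  imports "HOL-Probability.Probability"
begin

definition prob_simplex :: "(real ^ 'y) set" where
  "prob_simplex = {p. (\<forall>i. 0 \<le> p $ i) \<and> (\<Sum>i\<in>UNIV. p $ i) = 1}"

definition models :: "(real ^ 'y ^ 'x) set" where
  "models = {\<pi>. \<forall>x. \<pi> $ x \<in> prob_simplex}"

definition bregman :: "(real ^ 'y \<Rightarrow> real) \<Rightarrow> (real ^ 'y \<Rightarrow> real ^ 'y)
    \<Rightarrow> real ^ 'y \<Rightarrow> real ^ 'y \<Rightarrow> real" where
  "bregman F gradF p q = F p - F q - gradF q \<bullet> (p - q)"

definition Ex :: "'x pmf \<Rightarrow> ('x \<Rightarrow> real) \<Rightarrow> real" where
  "Ex D f = measure_pmf.expectation D f"

definition Improv :: "(real ^ 'y \<Rightarrow> real) \<Rightarrow> (real ^ 'y \<Rightarrow> real ^ 'y) \<Rightarrow> 'x pmf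
    \<Rightarrow> real ^ 'y ^ 'x \<Rightarrow> real ^ 'y ^ 'x \<Rightarrow> real ^ 'y ^ 'x \<Rightarrow> real" where
  "Improv F gradF D pistar pi0 \<pi> =
     Ex D (\<lambda>x. bregman F gradF (pistar $ x) (pi0 $ x))
   - Ex D (\<lambda>x. bregman F gradF (pistar $ x) (\<pi> $ x))"

definition Fclass :: "(real ^ 'y \<Rightarrow> real) \<Rightarrow> (real ^ 'y \<Rightarrow> real ^ 'y)
    \<Rightarrow> real ^ 'y ^ 'x \<Rightarrow> (real ^ 'y ^ 'x) set \<Rightarrow> ('x \<Rightarrow> real) set" where
  "Fclass F gradF pi0 P =
     {(\<lambda>x. bregman F gradF (\<pi> $ x) (pi0 $ x)) | \<pi>. \<pi> \<in> P}
   \<union> {(\<lambda>x. bregman F gradF (\<pi>' $ x) (\<pi> $ x)) | \<pi> \<pi>'. \<pi> \<in> P \<and> \<pi>' \<in> P}"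

definition eps_dev :: "'x pmf \<Rightarrow> 'x pmf \<Rightarrow> ('x \<Rightarrow> real) set \<Rightarrow> real" where
  "eps_dev D Dhat FF = (SUP f\<in>FF. \<bar>Ex D f - Ex Dhat f\<bar>)"

end

theory Submission
  imports Defs
begin

lemma Ex_sum: "Ex D f = (\<Sum>x\<in>UNIV. pmf D x * f (x::'x::finite))"
  unfolding Ex_def by (subst integral_measure_pmf[where A=UNIV]) auto

lemma min_deriv_nonneg:
  fixes g :: "real \<Rightarrow> real"
  assumes "(g has_real_derivative l) (at 0)" "\<And>t. 0 < t \<Longrightarrow> t \<le> 1 \<Longrightarrow> g 0 \<le> g t"
  shows "0 \<le> l"
proof (rule ccontr)
  assume "\<not> 0 \<le> l"
  then obtain d where d: "d>0" "\<forall>h>0. h<d \<longrightarrow> g 0 > g (0+h)"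
    using DERIV_neg_dec_right[OF assms(1)] by force
  let ?h = "min (d/2) 1"
  have "g 0 > g ?h" using d by auto
  moreover have "g 0 \<le> g ?h" using assms(2)[of ?h] d by auto
  ultimately show False by simp
qed

lemma line_deriv:
  assumes "q \<in> U" "\<And>q. q \<in> U \<Longrightarrow> (F has_derivative (\<lambda>h. gradF q \<bullet> h)) (at q)"
  shows "((\<lambda>t. F ((1-t) *\<^sub>R q + t *\<^sub>R r)) has_real_derivative (gradF q \<bullet> (r - q))) (at 0)"
proof -
  have e: "(\<lambda>t. F ((1-t) *\<^sub>R q + t *\<^sub>R r)) = (\<lambda>t. F (q + t *\<^sub>R (r - q)))"
    by (auto simp: algebra_simps)
  have l: "((\<lambda>t::real. q + t *\<^sub>R (r - q)) has_derivative (\<lambda>h. h *\<^sub>R (r - q))) (at 0)"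
    by (auto intro!: derivative_eq_intros)
  have "((\<lambda>t. F (q + t *\<^sub>R (r - q))) has_derivative (\<lambda>h. gradF q \<bullet> (h *\<^sub>R (r - q)))) (at 0)"
  proof -
    have "(F has_derivative (\<lambda>h. gradF q \<bullet> h)) (at ((\<lambda>t::real. q + t *\<^sub>R (r - q)) 0))"
      using assms by simp
    from has_derivative_compose[OF l this] show ?thesis by simp
  qed
  then show ?thesis unfolding e has_field_derivative_def
    by (rule has_derivative_eq_rhs) (auto simp: fun_eq_iff)
qed

lemma tangent:
  assumes "convex_on U F" "\<And>q. q \<in> U \<Longrightarrow> (F has_derivative (\<lambda>h. gradF q \<bullet> h)) (at q)"
    "q \<in> U" "r \<in> U"
  shows "F q + gradF q \<bullet> (r - q) \<le> F r"
proof -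
  let ?h = "\<lambda>t. ((1-t) * F q + t * F r) - F ((1-t) *\<^sub>R q + t *\<^sub>R r)"
  have "(?h has_real_derivative ((F r - F q) - gradF q \<bullet> (r - q))) (at 0)"
    by (rule DERIV_diff[OF _ line_deriv[OF assms(3,2)]]) (auto intro!: derivative_eq_intros)
  moreover have "?h 0 \<le> ?h t" if "0 < t" "t \<le> 1" for t
    using convex_onD[OF assms(1), of t q r] that assms(3,4) by auto
  ultimately have "0 \<le> (F r - F q) - gradF q \<bullet> (r - q)" by (rule min_deriv_nonneg)
  then show ?thesis by simp
qed

lemma simplex_norm: "p \<in> prob_simplex \<Longrightarrow> norm p \<le> 1"
  using norm_le_l1_cart[of p] unfolding prob_simplex_def by auto

lemma simplex_compact: "compact (prob_simplex :: (real^'y::finite) set)"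
proof -
  have "prob_simplex = (\<Inter>i. {p::real^'y. 0 \<le> p $ i}) \<inter> {p. (\<Sum>i\<in>UNIV. p $ i) = 1}"
    unfolding prob_simplex_def by auto
  moreover have "closed \<dots>"
    by (intro closed_Int closed_INT ballI closed_Collect_le closed_Collect_eq continuous_intros)
  moreover have "bounded (prob_simplex :: (real^'y::finite) set)"
    unfolding bounded_iff using simplex_norm by blast
  ultimately show ?thesis using compact_eq_bounded_closed by metis
qed

lemma breg_bound:
  assumes U_open: "open U" and simplex_U: "prob_simplex \<subseteq> U"
    and F_convex: "convex_on U F"
    and F_grad: "\<And>q. q \<in> U \<Longrightarrow> (F has_derivative (\<lambda>h. gradF q \<bullet> h)) (at q)"
  obtains Bd where "\<And>p q. p \<in> prob_simplex \<Longrightarrow> q \<in> (prob_simplex :: (real^'y::finite) set) \<Longrightarrow>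
     \<bar>bregman F gradF p q\<bar> \<le> Bd"
proof -
  obtain e where e: "e>0" "(\<Union>x\<in>prob_simplex. cball x e) \<subseteq> U"
    using compact_subset_open_imp_cball_epsilon_subset[OF simplex_compact U_open simplex_U] by blast
  let ?K = "{x + y | x y. x \<in> (prob_simplex :: (real^'y) set) \<and> y \<in> cball 0 e}"
  have Kc: "compact ?K" by (intro compact_sums simplex_compact compact_cball)
  have KU: "?K \<subseteq> U"
  proof
    fix z assume "z \<in> ?K"
    then obtain x y where "z = x + y" "x \<in> prob_simplex" "y \<in> cball 0 e" by blast
    then have "z \<in> cball x e" by (auto simp: dist_norm)
    then show "z \<in> U" using e(2) \<open>x \<in> prob_simplex\<close> by blast
  qed
  have "continuous_on ?K F"
    by (rule continuous_at_imp_continuous_on)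
       (use KU F_grad has_derivative_continuous in blast)
  then have "bounded (F ` ?K)" by (intro compact_imp_bounded compact_continuous_image Kc)
  then obtain M where M: "\<And>y. y \<in> ?K \<Longrightarrow> \<bar>F y\<bar> \<le> M" unfolding bounded_real by auto
  have inK: "\<And>p v. p \<in> prob_simplex \<Longrightarrow> norm v \<le> e \<Longrightarrow> p + v \<in> ?K" by auto
  show thesis
  proof (rule that[of "4*M + 4*M/e"])
    fix p q :: "real^'y" assume p: "p \<in> prob_simplex" and q: "q \<in> prob_simplex"
    have pU: "p \<in> U" and qU: "q \<in> U" using p q simplex_U by auto
    have Fp: "\<bar>F p\<bar> \<le> M" using inK[OF p, of 0] M e by auto
    have Fq: "\<bar>F q\<bar> \<le> M" using inK[OF q, of 0] M e by auto
    have t1: "gradF q \<bullet> (p - q) \<le> F p - F q" using tangent[OF F_convex F_grad qU pU] by simp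
    define v where "v = (e/2) *\<^sub>R (q - p)"
    have "norm v = e/2 * norm (q - p)" unfolding v_def using e by simp
    also have "\<dots> \<le> e/2 * (norm q + norm p)"
      using e norm_triangle_ineq4[of q p] by (intro mult_left_mono) auto
    also have "\<dots> \<le> e/2 * 2"
      using e simplex_norm[OF p] simplex_norm[OF q] by (intro mult_left_mono) auto
    finally have nv: "norm v \<le> e" by simp
    have vK: "q + v \<in> ?K" by (rule inK[OF q nv])
    have t2: "F q + gradF q \<bullet> v \<le> F (q + v)"
      using tangent[OF F_convex F_grad qU, of "q + v"] vK KU by auto
    have "\<bar>F (q+v)\<bar> \<le> M" using M vK by blast
    hence "(e/2) * (gradF q \<bullet> (q - p)) \<le> 2*M" using t2 Fq by (simp add: v_def)
    hence "gradF q \<bullet> (q - p) \<le> 4*M/e" using e by (simp add: field_simps)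
    moreover have "gradF q \<bullet> (p - q) = - (gradF q \<bullet> (q - p))" by (simp add: inner_diff_right)
    ultimately show "\<bar>bregman F gradF p q\<bar> \<le> 4*M + 4*M/e"
      unfolding bregman_def using t1 Fp Fq by (auto simp: abs_le_iff)
  qed
qed

lemma Ex_bound:
  fixes f :: "'x::finite \<Rightarrow> real"
  assumes "\<And>x. \<bar>f x\<bar> \<le> Bd"
  shows "\<bar>Ex D f\<bar> \<le> (Bd::real)"
proof -
  have "\<bar>Ex D f\<bar> \<le> (\<Sum>x\<in>UNIV. \<bar>pmf D x * f x\<bar>)" unfolding Ex_sum by (rule sum_abs)
  also have "\<dots> \<le> (\<Sum>x\<in>UNIV. pmf D x * Bd)"
    by (intro sum_mono) (auto simp: abs_mult intro!: mult_left_mono assms)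
  also have "\<dots> = Bd" by (simp add: sum_distrib_right[symmetric] sum_pmf_eq_1)
  finally show ?thesis .
qed

theorem lemma5:
  fixes F :: "real ^ 'y::finite \<Rightarrow> real"
    and gradF :: "real ^ 'y \<Rightarrow> real ^ 'y"
    and U :: "(real ^ 'y) set"
    and Pi C :: "(real ^ 'y ^ 'x::finite) set"
    and pi0 pistar pihat pihatS :: "real ^ 'y ^ 'x"
    and D :: "'x pmf"
    and S :: "'x list"
  assumes U_open: "open U" and U_convex: "convex U" and simplex_U: "prob_simplex \<subseteq> U"
    and F_convex: "convex_on U F"
    and F_grad: "\<And>q. q \<in> U \<Longrightarrow> (F has_derivative (\<lambda>h. gradF q \<bullet> h)) (at q)"
    and Pi_models: "Pi \<subseteq> models" and Pi_closed: "closed Pi" and Pi_convex: "convex Pi"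
    and C_closed: "closed C" and C_convex: "convex C"
    and Pibar_closed: "closed (C \<inter> Pi)" and Pibar_convex: "convex (C \<inter> Pi)"
    and pi0_model: "pi0 \<in> models"
    and D_full: "set_pmf D = UNIV"
    and S_ne: "S \<noteq> []"
    and pihat_mem: "pihat \<in> C \<inter> Pi"
    and pihat_min: "\<And>\<pi>. \<pi> \<in> C \<inter> Pi \<Longrightarrow>
          Ex D (\<lambda>x. bregman F gradF (pihat $ x) (pi0 $ x)) \<le> Ex D (\<lambda>x. bregman F gradF (\<pi> $ x) (pi0 $ x))"
    and pihatS_mem: "pihatS \<in> C \<inter> Pi"
    and pihatS_min: "\<And>\<pi>. \<pi> \<in> C \<inter> Pi \<Longrightarrow>
          Ex (pmf_of_multiset (mset S)) (\<lambda>x. bregman F gradF (pihatS $ x) (pi0 $ x))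
          \<le> Ex (pmf_of_multiset (mset S)) (\<lambda>x. bregman F gradF (\<pi> $ x) (pi0 $ x))"
    and pistar_mem: "pistar \<in> C \<inter> Pi"
  shows "let Dhat = pmf_of_multiset (mset S);
             eps = eps_dev D Dhat (Fclass F gradF pi0 (C \<inter> Pi))
         in Ex D (\<lambda>x. bregman F gradF (pihat $ x) (pi0 $ x))
              \<le> Ex D (\<lambda>x. bregman F gradF (pihatS $ x) (pi0 $ x))
          \<and> Ex D (\<lambda>x. bregman F gradF (pihatS $ x) (pi0 $ x))
              \<le> Ex D (\<lambda>x. bregman F gradF (pihat $ x) (pi0 $ x)) + 2 * eps
          \<and> Improv F gradF D pistar pi0 pihatS
              \<ge> Ex D (\<lambda>x. bregman F gradF (pihat $ x) (pi0 $ x))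
                - Ex D (\<lambda>x. bregman F gradF (pistar $ x) (pihat $ x)) - 6 * eps"
proof -
  define Dh where "Dh = pmf_of_multiset (mset S)"
  define FC where "FC = Fclass F gradF pi0 (C \<inter> Pi)"
  define eps where "eps = eps_dev D Dh FC"
  have smem: "\<And>\<pi> x. \<pi> \<in> C \<inter> Pi \<Longrightarrow> \<pi> $ x \<in> prob_simplex"
    using Pi_models unfolding models_def by auto
  have s0: "\<And>x. pi0 $ x \<in> prob_simplex" using pi0_model unfolding models_def by auto
  have inU: "\<And>\<pi> x. \<pi> \<in> C \<inter> Pi \<Longrightarrow> \<pi> $ x \<in> U" using smem simplex_U by blast
  have inU0: "\<And>x. pi0 $ x \<in> U" using s0 simplex_U by blast
  obtain Bd where Bd: "\<And>p q. p \<in> prob_simplex \<Longrightarrow> q \<in> (prob_simplex :: (real^'y) set) \<Longrightarrow>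
     \<bar>bregman F gradF p q\<bar> \<le> Bd"
    using breg_bound[OF U_open simplex_U F_convex F_grad] by blast
  have fb: "\<And>f x. f \<in> FC \<Longrightarrow> \<bar>f x\<bar> \<le> Bd"
    unfolding FC_def Fclass_def using Bd smem s0 by auto
  have dev_bd: "\<And>f. f \<in> FC \<Longrightarrow> \<bar>Ex D f - Ex Dh f\<bar> \<le> 2*Bd"
  proof -
    fix f assume "f \<in> FC"
    then have "\<bar>Ex D f\<bar> \<le> Bd" "\<bar>Ex Dh f\<bar> \<le> Bd" using fb Ex_bound by blast+
    then show "\<bar>Ex D f - Ex Dh f\<bar> \<le> 2*Bd" by linarith
  qed
  have bdd: "bdd_above ((\<lambda>f. \<bar>Ex D f - Ex Dh f\<bar>) ` FC)"
    by (rule bdd_aboveI2) (rule dev_bd)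
  have dev: "\<And>f. f \<in> FC \<Longrightarrow> \<bar>Ex D f - Ex Dh f\<bar> \<le> eps"
    unfolding eps_def eps_dev_def by (rule cSUP_upper[OF _ bdd])
  have inFC1: "\<And>\<pi>. \<pi> \<in> C \<inter> Pi \<Longrightarrow> (\<lambda>x. bregman F gradF (\<pi> $ x) (pi0 $ x)) \<in> FC"
    unfolding FC_def Fclass_def by blast
  have inFC2: "\<And>\<pi> \<pi>'. \<pi> \<in> C \<inter> Pi \<Longrightarrow> \<pi>' \<in> C \<inter> Pi \<Longrightarrow>
      (\<lambda>x. bregman F gradF (\<pi>' $ x) (\<pi> $ x)) \<in> FC"
    unfolding FC_def Fclass_def by blast
  note d1 = dev[OF inFC1[OF pistar_mem]]
  note d2 = dev[OF inFC2[OF pihatS_mem pistar_mem]]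
  note d3 = dev[OF inFC1[OF pihatS_mem]]
  note d4 = dev[OF inFC1[OF pihat_mem]]
  note m1 = pihat_min[OF pihatS_mem]
  note m2 = pihatS_min[OF pihat_mem, folded Dh_def]
  have eps0: "0 \<le> eps" using d1 by linarith
  \<comment> \<open>first-order optimality of pihatS\<close>
  define w where "w = pmf Dh"
  define G where "G = (\<lambda>t. \<Sum>x\<in>UNIV. w x * (F ((1-t) *\<^sub>R (pihatS $ x) + t *\<^sub>R (pistar $ x))
      - F (pi0 $ x) - ((1-t) * (gradF (pi0 $ x) \<bullet> pihatS $ x) + t * (gradF (pi0 $ x) \<bullet> pistar $ x)
      - gradF (pi0 $ x) \<bullet> pi0 $ x)))"
  have GE: "G t = Ex Dh (\<lambda>x. bregman F gradF (((1-t) *\<^sub>R pihatS + t *\<^sub>R pistar) $ x) (pi0 $ x))" for t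
    unfolding G_def Ex_sum w_def bregman_def
    by (intro sum.cong refl arg_cong2[where f="(*)"]) (simp add: inner_diff_right inner_add_right)
  have Gd: "(G has_real_derivative (\<Sum>x\<in>UNIV. w x * (gradF (pihatS $ x) \<bullet> (pistar $ x - pihatS $ x)
       - (gradF (pi0 $ x) \<bullet> pistar $ x - gradF (pi0 $ x) \<bullet> pihatS $ x)))) (at 0)"
    unfolding G_def
    apply (rule DERIV_sum)
    apply (rule DERIV_cmult)
    apply (rule DERIV_cong)
     apply (rule DERIV_diff[OF DERIV_diff[OF line_deriv[OF inU[OF pihatS_mem] F_grad] DERIV_const]])
      apply assumption
     apply (auto intro!: derivative_eq_intros simp: algebra_simps)
    done
  have "0 \<le> (\<Sum>x\<in>UNIV. w x * (gradF (pihatS $ x) \<bullet> (pistar $ x - pihatS $ x)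
       - (gradF (pi0 $ x) \<bullet> pistar $ x - gradF (pi0 $ x) \<bullet> pihatS $ x)))"
  proof (rule min_deriv_nonneg[OF Gd])
    fix t :: real assume t: "0 < t" "t \<le> 1"
    have mem: "(1-t) *\<^sub>R pihatS + t *\<^sub>R pistar \<in> C \<inter> Pi"
      using t by (intro convexD[OF Pibar_convex pihatS_mem pistar_mem]) auto
    show "G 0 \<le> G t" unfolding GE using pihatS_min[OF mem] by (simp add: Dh_def)
  qed
  moreover have "(\<Sum>x\<in>UNIV. w x * (gradF (pihatS $ x) \<bullet> (pistar $ x - pihatS $ x)
       - (gradF (pi0 $ x) \<bullet> pistar $ x - gradF (pi0 $ x) \<bullet> pihatS $ x)))
     = (\<Sum>x\<in>UNIV. w x * ((gradF (pihatS $ x) - gradF (pi0 $ x)) \<bullet> (pistar $ x - pihatS $ x)))"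
    by (intro sum.cong refl arg_cong2[where f="(*)"]) (simp add: inner_diff_left inner_diff_right)
  ultimately have FO: "0 \<le> (\<Sum>x\<in>UNIV. w x * ((gradF (pihatS $ x) - gradF (pi0 $ x)) \<bullet> (pistar $ x - pihatS $ x)))"
    by simp
  have three: "Ex Dh (\<lambda>x. bregman F gradF (pistar $ x) (pi0 $ x)) =
      Ex Dh (\<lambda>x. bregman F gradF (pistar $ x) (pihatS $ x)) + Ex Dh (\<lambda>x. bregman F gradF (pihatS $ x) (pi0 $ x))
      + (\<Sum>x\<in>UNIV. w x * ((gradF (pihatS $ x) - gradF (pi0 $ x)) \<bullet> (pistar $ x - pihatS $ x)))"
    unfolding Ex_sum w_def sum.distrib[symmetric] distrib_left[symmetric]
    by (intro sum.cong refl arg_cong2[where f="(*)"])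
       (simp add: bregman_def inner_diff_left inner_diff_right algebra_simps)
  have nn: "0 \<le> Ex D (\<lambda>x. bregman F gradF (pistar $ x) (pihat $ x))"
    unfolding Ex_sum bregman_def
    using tangent[OF F_convex F_grad inU[OF pihat_mem] inU[OF pistar_mem]]
    by (intro sum_nonneg mult_nonneg_nonneg) (auto simp: algebra_simps)
  show ?thesis
    unfolding Let_def Improv_def Dh_def[symmetric] FC_def[symmetric] eps_def[symmetric]
    using d1 d2 d3 d4 m1 m2 FO three nn eps0 by (auto simp: abs_le_iff)
qed

end
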